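(* Let $M\le N$, $K=N-M$. Let $A$ be a commutative unital $C^*$-algebra and $P\in M_M(A)$ a submagic matrix whose entries generate $A$, and write $A=C(S)$ with $S\subset\widetilde S_M$ so that $P_{ij}$ is the function $\sigma\mapsto1$ if $\sigma(j)=i$ and $0$ otherwise. The following are equivalent: (1) $P$ can be completed to a magic matrix $\widetilde P\in M_N(A)$ (one whose upper-left $M\times M$ block is $P$); (2) each $\sigma\in S$ has at most $K$ undefined values (i.e. if $\sigma:X\to Y$ then $M-|X|\le K$); (3) $\sum_{i,j}P_{ij}\ge (M-K)1$.
   Context: $\widetilde S_M$ is the set of partial permutations of $\{1,\ldots,M\}$, i.e. bijections $\sigma:X\to Y$ with $X,Y\subset\{1,\ldots,M\}$; $\sigma(j)$ is undefined for $j\notin X$. A submagic matrix over $A$ is a square matrix of orthogonal projections, pairwise orthogonal within each row and each column; it is magic if moreover each row and each column sums to $1$. Every commutative unital $C^*$-algebra generated by the entries of an $M\times M$ submagic matrix is of the form $C(S)$ as described, for some $S\subset\widetilde S_M$. *)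

theory Defs
  imports Complex_Main "HOL-Library.Complex_Order"
begin

definition partial_perms :: "nat \<Rightarrow> (nat \<Rightarrow> nat option) set" where
  "partial_perms M = {\<sigma>. dom \<sigma> \<subseteq> {1..M} \<and> ran \<sigma> \<subseteq> {1..M} \<and> inj_on \<sigma> (dom \<sigma>)}"

text \<open>The commutative C*-algebra C(S) is modelled as complex-valued functions on S
  (S is finite); equalities and orderings are pointwise on S.
  Matrices are indexed by {1..n}.\<close>

definition is_proj_on :: "'a set \<Rightarrow> ('a \<Rightarrow> complex) \<Rightarrow> bool" where
  "is_proj_on S f \<longleftrightarrow> (\<forall>x\<in>S. cnj (f x) = f x \<and> f x * f x = f x)"

definition submagic_on :: "'a set \<Rightarrow> nat \<Rightarrow> (nat \<Rightarrow> nat \<Rightarrow> 'a \<Rightarrow> complex) \<Rightarrow> bool" where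
  "submagic_on S n Q \<longleftrightarrow>
     (\<forall>i\<in>{1..n}. \<forall>j\<in>{1..n}. is_proj_on S (Q i j)) \<and>
     (\<forall>i\<in>{1..n}. \<forall>j\<in>{1..n}. \<forall>k\<in>{1..n}. j \<noteq> k \<longrightarrow>
        (\<forall>x\<in>S. Q i j x * Q i k x = 0 \<and> Q j i x * Q k i x = 0))"

definition magic_on :: "'a set \<Rightarrow> nat \<Rightarrow> (nat \<Rightarrow> nat \<Rightarrow> 'a \<Rightarrow> complex) \<Rightarrow> bool" where
  "magic_on S n Q \<longleftrightarrow> submagic_on S n Q \<and>
     (\<forall>i\<in>{1..n}. \<forall>x\<in>S. (\<Sum>j=1..n. Q i j x) = 1) \<and>
     (\<forall>j\<in>{1..n}. \<forall>x\<in>S. (\<Sum>i=1..n. Q i j x) = 1)"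

end

theory Submission
  imports Defs
begin

lemma proj01: assumes "cnj q = q" "q * q = (q::complex)" shows "q = 0 \<or> q = 1"
proof -
  have "q * (q - 1) = 0" using assms(2) by (simp add: algebra_simps)
  thus ?thesis by auto
qed

lemma ext_exists:
  assumes sp: "\<sigma> \<in> partial_perms M" and MN: "M \<le> N" and le: "M - card (dom \<sigma>) \<le> N - M"
  shows "\<exists>f. f ` {1..N} \<subseteq> {1..N} \<and> inj_on f {1..N} \<and> (\<forall>j\<in>dom \<sigma>. \<sigma> j = Some (f j))
            \<and> (\<forall>j\<in>{1..M}-dom \<sigma>. f j > M)"
proof -
  define D where "D = dom \<sigma>"
  define h where "h j = the (\<sigma> j)" for j
  have Dsub: "D \<subseteq> {1..M}" and ransub: "ran \<sigma> \<subseteq> {1..M}" and inj\<sigma>: "inj_on \<sigma> D"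
    using sp by (auto simp: partial_perms_def D_def)
  have finD: "finite D" using Dsub finite_subset by blast
  have hs: "\<And>j. j \<in> D \<Longrightarrow> \<sigma> j = Some (h j)" by (auto simp: D_def h_def)
  have injh: "inj_on h D"
  proof (rule inj_onI)
    fix x y assume "x \<in> D" "y \<in> D" "h x = h y"
    hence "\<sigma> x = \<sigma> y" using hs by metis
    thus "x = y" using inj\<sigma> \<open>x \<in> D\<close> \<open>y \<in> D\<close> by (auto dest: inj_onD)
  qed
  have ranh: "h ` D = ran \<sigma>"
  proof
    show "h ` D \<subseteq> ran \<sigma>" using hs by (auto simp: ran_def)
    show "ran \<sigma> \<subseteq> h ` D"
    proof
      fix y assume "y \<in> ran \<sigma>"
      then obtain x where "\<sigma> x = Some y" by (auto simp: ran_def)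
      hence "x \<in> D" "h x = y" by (auto simp: D_def h_def)
      thus "y \<in> h ` D" by blast
    qed
  qed
  have cardR: "card (ran \<sigma>) = card D" using ranh injh card_image by metis
  have cardD: "card D \<le> M" using Dsub card_mono[of "{1..M}" D] by simp
  define C1 where "C1 = {1..M} - D"
  have cC1: "card C1 = M - card D" unfolding C1_def using Dsub finD
    by (simp add: card_Diff_subset)
  have "card C1 \<le> card {M+1..N}" using cC1 le D_def by simp
  then obtain T where T: "T \<subseteq> {M+1..N}" "card T = card C1"
    using obtain_subset_with_card_n by metis
  have finT: "finite T" using T(1) finite_subset by blast
  obtain g1 where g1: "bij_betw g1 C1 T"
    using finite_same_card_bij[of C1 T] T finT unfolding C1_def by auto
  define R2 where "R2 = {1..N} - ran \<sigma> - T"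
  have disj: "ran \<sigma> \<inter> T = {}" using ransub T(1) by fastforce
  have RT: "ran \<sigma> \<union> T \<subseteq> {1..N}" using ransub T(1) MN by auto
  have finRT: "finite (ran \<sigma> \<union> T)" using RT finite_subset by blast
  have "card R2 = N - card (ran \<sigma> \<union> T)"
  proof -
    have "R2 = {1..N} - (ran \<sigma> \<union> T)" unfolding R2_def by blast
    thus ?thesis using card_Diff_subset[OF finRT RT] by simp
  qed
  also have "card (ran \<sigma> \<union> T) = card D + (M - card D)"
    using card_Un_disjoint[OF _ finT disj] RT finRT cardR T(2) cC1 by auto
  finally have cR2: "card R2 = card {M+1..N}" using cardD by simp
  have finR2: "finite R2" unfolding R2_def by simp
  obtain g2 where g2: "bij_betw g2 {M+1..N} R2"
    using finite_same_card_bij[of "{M+1..N}" R2] cR2 finR2 by auto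
  define f where "f j = (if j \<in> D then h j else if j \<in> C1 then g1 j else g2 j)" for j
  have split: "{1..N} = D \<union> C1 \<union> {M+1..N}" using Dsub MN unfolding C1_def by auto
  have im1: "\<And>j. j \<in> D \<Longrightarrow> f j \<in> ran \<sigma>" using ranh f_def by auto
  have im2: "\<And>j. j \<in> C1 \<Longrightarrow> f j \<in> T" using g1 f_def C1_def by (auto simp: bij_betw_def)
  have im3: "\<And>j. j \<in> {M+1..N} \<Longrightarrow> f j \<in> R2" using g2 f_def C1_def Dsub by (auto simp: bij_betw_def)
  have CD: "C1 \<inter> D = {}" "D \<inter> {M+1..N} = {}" "C1 \<inter> {M+1..N} = {}" using Dsub by (auto simp: C1_def)
  have "inj_on f {1..N}"
  proof (rule inj_onI)
    fix x y assume x: "x \<in> {1..N}" and y: "y \<in> {1..N}" and e: "f x = f y"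
    show "x = y"
    proof -
      { assume "x \<in> D" "y \<in> D" hence ?thesis using e injh f_def by (auto dest: inj_onD) }
      moreover { assume "x \<in> C1" "y \<in> C1" hence "x \<notin> D" "y \<notin> D" "f x = g1 x" "f y = g1 y" using CD f_def by auto
        hence ?thesis using e g1 \<open>x \<in> C1\<close> \<open>y \<in> C1\<close> by (auto simp: bij_betw_def dest: inj_onD) }
      moreover { assume "x \<in> {M+1..N}" "y \<in> {M+1..N}" hence "f x = g2 x" "f y = g2 y" using CD f_def by auto
        hence ?thesis using e g2 \<open>x \<in> {M+1..N}\<close> \<open>y \<in> {M+1..N}\<close> by (auto simp: bij_betw_def dest: inj_onD) }
      moreover { assume a: "x \<in> D" "y \<in> C1"
        have "f x \<in> ran \<sigma>" "f y \<in> T" using im1[OF a(1)] im2[OF a(2)] by auto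
        hence ?thesis using e disj by auto }
      moreover { assume a: "x \<in> C1" "y \<in> D"
        have "f y \<in> ran \<sigma>" "f x \<in> T" using im1[OF a(2)] im2[OF a(1)] by auto
        hence ?thesis using e disj by auto }
      moreover { assume a: "x \<in> D" "y \<in> {M+1..N}"
        have "f x \<in> ran \<sigma>" "f y \<notin> ran \<sigma>" using im1[OF a(1)] im3[OF a(2)] by (auto simp: R2_def)
        hence ?thesis using e by auto }
      moreover { assume a: "y \<in> D" "x \<in> {M+1..N}"
        have "f y \<in> ran \<sigma>" "f x \<notin> ran \<sigma>" using im1[OF a(1)] im3[OF a(2)] by (auto simp: R2_def)
        hence ?thesis using e by auto }
      moreover { assume a: "x \<in> C1" "y \<in> {M+1..N}"
        have "f x \<in> T" "f y \<notin> T" using im2[OF a(1)] im3[OF a(2)] by (auto simp: R2_def)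
        hence ?thesis using e by auto }
      moreover { assume a: "y \<in> C1" "x \<in> {M+1..N}"
        have "f y \<in> T" "f x \<notin> T" using im2[OF a(1)] im3[OF a(2)] by (auto simp: R2_def)
        hence ?thesis using e by auto }
      ultimately show ?thesis using x y split by blast
    qed
  qed
  moreover have "f ` {1..N} \<subseteq> {1..N}"
    using split im1 im2 im3 RT R2_def by blast
  moreover have "\<forall>j\<in>dom \<sigma>. \<sigma> j = Some (f j)" using hs f_def D_def by auto
  moreover have "\<forall>j\<in>{1..M}-dom \<sigma>. f j > M"
  proof
    fix j assume "j \<in> {1..M}-dom \<sigma>"
    hence "j \<in> C1" by (simp add: C1_def D_def)
    hence "f j \<in> {M+1..N}" using im2 T(1) by blast
    thus "f j > M" by simp
  qed
  ultimately show ?thesis by (intro exI[of _ f]) simp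
qed


lemma cardsum:
  assumes sp: "\<sigma> \<in> partial_perms M"
    and P: "\<And>i j \<sigma>. P i j \<sigma> = (if \<sigma> j = Some i then 1 else (0::complex))"
  shows "(\<Sum>j=1..M. \<Sum>i=1..M. P i j \<sigma>) = of_nat (card (dom \<sigma>))"
proof -
  have Dsub: "dom \<sigma> \<subseteq> {1..M}" and ransub: "ran \<sigma> \<subseteq> {1..M}"
    using sp by (auto simp: partial_perms_def)
  have inner: "(\<Sum>i=1..M. P i j \<sigma>) = (if j \<in> dom \<sigma> then 1 else 0)" for j
  proof (cases "\<sigma> j")
    case None thus ?thesis using P by (simp add: domIff)
  next
    case (Some i0)
    hence "i0 \<in> {1..M}" using ransub by (auto simp: ran_def)
    thus ?thesis using P Some by (simp add: domIff)
  qed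
  have "(\<Sum>j=1..M. \<Sum>i=1..M. P i j \<sigma>) = (\<Sum>j=1..M. (if j \<in> dom \<sigma> then 1 else 0))"
    using inner by simp
  also have "\<dots> = of_nat (card ({1..M} \<inter> dom \<sigma>))"
    by (simp add: sum.If_cases Int_def)
  also have "{1..M} \<inter> dom \<sigma> = dom \<sigma>" using Dsub by blast
  finally show ?thesis .
qed

theorem proposition3p4:
  fixes M N K :: nat
    and S :: "(nat \<Rightarrow> nat option) set"
    and P :: "nat \<Rightarrow> nat \<Rightarrow> (nat \<Rightarrow> nat option) \<Rightarrow> complex"
  assumes "M \<le> N" and "K = N - M"
    and "S \<subseteq> partial_perms M"
    and "\<And>i j \<sigma>. P i j \<sigma> = (if \<sigma> j = Some i then 1 else 0)"
  shows "((\<exists>Q. magic_on S N Q \<and> (\<forall>i\<in>{1..M}. \<forall>j\<in>{1..M}. \<forall>\<sigma>\<in>S. Q i j \<sigma> = P i j \<sigma>))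
            \<longleftrightarrow> (\<forall>\<sigma>\<in>S. M - card (dom \<sigma>) \<le> K))
       \<and> ((\<forall>\<sigma>\<in>S. M - card (dom \<sigma>) \<le> K)
            \<longleftrightarrow> (\<forall>\<sigma>\<in>S. of_int (int M - int K) \<le> (\<Sum>i=1..M. \<Sum>j=1..M. P i j \<sigma>)))"
proof -
  note MN = assms(1) and Kdef = assms(2) and SP = assms(3) and Pdef = assms(4)
  have cs: "(\<Sum>i=1..M. \<Sum>j=1..M. P i j \<sigma>) = of_nat (card (dom \<sigma>))" if "\<sigma> \<in> S" for \<sigma>
    using cardsum[of \<sigma> M P] SP that Pdef sum.swap[of "\<lambda>i j. P i j \<sigma>" "{1..M}" "{1..M}"] by auto
  have cardle: "card (dom \<sigma>) \<le> M" if "\<sigma> \<in> S" for \<sigma>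
  proof -
    have "dom \<sigma> \<subseteq> {1..M}" using SP that by (auto simp: partial_perms_def)
    thus ?thesis using card_mono[of "{1..M}" "dom \<sigma>"] by simp
  qed
  have part2: "(\<forall>\<sigma>\<in>S. M - card (dom \<sigma>) \<le> K)
            \<longleftrightarrow> (\<forall>\<sigma>\<in>S. of_int (int M - int K) \<le> (\<Sum>i=1..M. \<Sum>j=1..M. P i j \<sigma>))"
  proof -
    have "M - card (dom \<sigma>) \<le> K \<longleftrightarrow> (of_int (int M - int K) :: complex) \<le> of_nat (card (dom \<sigma>))"
      if "\<sigma> \<in> S" for \<sigma>
      using cardle[OF that] by (simp add: less_eq_complex_def) linarith
    thus ?thesis using cs by auto
  qed
  have fwd: "\<forall>\<sigma>\<in>S. M - card (dom \<sigma>) \<le> K"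
    if Q: "magic_on S N Q" "\<forall>i\<in>{1..M}. \<forall>j\<in>{1..M}. \<forall>\<sigma>\<in>S. Q i j \<sigma> = P i j \<sigma>" for Q
  proof
    fix \<sigma> assume s: "\<sigma> \<in> S"
    define q where "q i j = Q i j \<sigma>" for i j
    have q01: "q i j = 0 \<or> q i j = 1" if "i \<in> {1..N}" "j \<in> {1..N}" for i j
      using Q(1) s that proj01 unfolding magic_on_def submagic_on_def is_proj_on_def q_def by blast
    have qnn: "0 \<le> q i j" if "i \<in> {1..N}" "j \<in> {1..N}" for i j
      using q01[OF that] by (auto simp: less_eq_complex_def)
    have col: "(\<Sum>i=1..N. q i j) = 1" if "j \<in> {1..N}" for j
      using Q(1) s that unfolding magic_on_def q_def by blast
    have row: "(\<Sum>j=1..N. q i j) = 1" if "i \<in> {1..N}" for i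
      using Q(1) s that unfolding magic_on_def q_def by blast
    have spl: "{1..N} = {1..M} \<union> {M+1..N}" using MN by auto
    have "(of_nat M :: complex) = (\<Sum>j=1..M. \<Sum>i=1..N. q i j)"
      using col MN by simp
    also have "\<dots> = (\<Sum>j=1..M. (\<Sum>i=1..M. q i j) + (\<Sum>i=M+1..N. q i j))"
      by (rule sum.cong[OF refl], subst spl, rule sum.union_disjoint) auto
    also have "\<dots> = (\<Sum>j=1..M. \<Sum>i=1..M. P i j \<sigma>) + (\<Sum>j=1..M. \<Sum>i=M+1..N. q i j)"
      using Q(2) s by (simp add: sum.distrib q_def)
    also have "(\<Sum>j=1..M. \<Sum>i=1..M. P i j \<sigma>) = of_nat (card (dom \<sigma>))"
      using cardsum[of \<sigma> M P] SP s Pdef by auto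
    also have "(\<Sum>j=1..M. \<Sum>i=M+1..N. q i j) = (\<Sum>i=M+1..N. \<Sum>j=1..M. q i j)"
      by (rule sum.swap)
    also have "\<dots> \<le> (\<Sum>i=M+1..N. \<Sum>j=1..N. q i j)"
    proof (rule sum_mono)
      fix i assume "i \<in> {M+1..N}"
      hence i: "i \<in> {1..N}" by simp
      show "(\<Sum>j=1..M. q i j) \<le> (\<Sum>j=1..N. q i j)"
        by (rule sum_mono2) (use MN qnn i in auto)
    qed
    also have "\<dots> = of_nat K" using row Kdef by simp
    finally have "(of_nat M :: complex) \<le> of_nat (card (dom \<sigma>)) + of_nat K" by simp
    hence "M \<le> card (dom \<sigma>) + K" by (simp add: less_eq_complex_def)
    thus "M - card (dom \<sigma>) \<le> K" by simp
  qed
  have bwd: "\<exists>Q. magic_on S N Q \<and> (\<forall>i\<in>{1..M}. \<forall>j\<in>{1..M}. \<forall>\<sigma>\<in>S. Q i j \<sigma> = P i j \<sigma>)"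
    if H: "\<forall>\<sigma>\<in>S. M - card (dom \<sigma>) \<le> K"
  proof -
    have "\<forall>\<sigma>\<in>S. \<exists>f. f ` {1..N} \<subseteq> {1..N} \<and> inj_on f {1..N} \<and> (\<forall>j\<in>dom \<sigma>. \<sigma> j = Some (f j))
            \<and> (\<forall>j\<in>{1..M}-dom \<sigma>. f j > M)"
      using ext_exists H SP MN Kdef by blast
    then obtain F where F: "\<And>\<sigma>. \<sigma> \<in> S \<Longrightarrow> F \<sigma> ` {1..N} \<subseteq> {1..N} \<and> inj_on (F \<sigma>) {1..N}
        \<and> (\<forall>j\<in>dom \<sigma>. \<sigma> j = Some (F \<sigma> j)) \<and> (\<forall>j\<in>{1..M}-dom \<sigma>. F \<sigma> j > M)"
      by metis
    define Q where "Q i j \<sigma> = (if F \<sigma> j = i then 1 else (0::complex))" for i j \<sigma>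
    have sub: "submagic_on S N Q"
    proof -
      have "F x j \<noteq> F x k" if "x \<in> S" "j \<in> {1..N}" "k \<in> {1..N}" "j \<noteq> k" for x j k
        using F[OF that(1)] that(2-4) by (meson inj_onD)
      thus ?thesis unfolding submagic_on_def is_proj_on_def Q_def by auto
    qed
    have rows: "\<forall>i\<in>{1..N}. \<forall>x\<in>S. (\<Sum>j=1..N. Q i j x) = 1"
    proof (intro ballI)
      fix i x assume i: "i \<in> {1..N}" and x: "x \<in> S"
      have "F x ` {1..N} = {1..N}" using F[OF x] endo_inj_surj[of "{1..N}" "F x"] by auto
      hence "i \<in> F x ` {1..N}" using i by simp
      then obtain j0 where j0: "j0 \<in> {1..N}" "F x j0 = i" by (metis imageE)
      have "(\<Sum>j=1..N. Q i j x) = (\<Sum>j=1..N. if j = j0 then 1 else 0)"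
      proof (rule sum.cong[OF refl])
        fix j assume j: "j \<in> {1..N}"
        have "F x j = i \<longleftrightarrow> j = j0" using F[OF x] j j0 by (auto dest: inj_onD)
        thus "Q i j x = (if j = j0 then 1 else 0)" by (simp add: Q_def)
      qed
      also have "\<dots> = 1" using j0 by simp
      finally show "(\<Sum>j=1..N. Q i j x) = 1" .
    qed
    have cols: "\<forall>j\<in>{1..N}. \<forall>x\<in>S. (\<Sum>i=1..N. Q i j x) = 1"
    proof (intro ballI)
      fix j x assume j: "j \<in> {1..N}" and x: "x \<in> S"
      have "F x j \<in> {1..N}" using F[OF x] j by blast
      thus "(\<Sum>i=1..N. Q i j x) = 1" unfolding Q_def by (simp add: eq_commute[of "F x j"])
    qed
    have blk: "\<forall>i\<in>{1..M}. \<forall>j\<in>{1..M}. \<forall>\<sigma>\<in>S. Q i j \<sigma> = P i j \<sigma>"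
    proof (intro ballI)
      fix i j \<sigma> assume i: "i \<in> {1..M}" and j: "j \<in> {1..M}" and s: "\<sigma> \<in> S"
      show "Q i j \<sigma> = P i j \<sigma>"
      proof (cases "j \<in> dom \<sigma>")
        case True
        hence "\<sigma> j = Some (F \<sigma> j)" using F[OF s] by blast
        thus ?thesis by (simp add: Q_def Pdef)
      next
        case False
        hence "F \<sigma> j > M" "\<sigma> j = None" using F[OF s] j by auto
        thus ?thesis using i by (simp add: Q_def Pdef)
      qed
    qed
    show ?thesis using sub rows cols blk unfolding magic_on_def by blast
  qed
  show ?thesis using fwd bwd part2 by blast
qed

end
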